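(* Let $f$ be $\mu$-strongly quasi-convex around $x^\star$, and each $f_i$ be $L$-smooth and convex. Let $\{h^i\}_{i\in[n]}$ be such that $\frac{1}{n}\sum_{i=1}^{n}\mathbb{E}\left[\|h^i-\nabla f_i(x^\star)\|^2\right]\leq \alpha$, and let the stepsize be $\gamma \leq \frac{\delta }{8\sqrt{6}L}$. Then the iterates of EC-Approximate satisfy \[ \Psi_{t+1} \leq (1-c)\Psi_t-\frac{\gamma }{4}F_t+\gamma ^2\frac{\sigma^2}{n}+\gamma ^3\left( \frac{48L\alpha}{\delta ^2} + \frac{12L\sigma^2}{\delta} \right), \] where $\Psi_t = X_t + aE_t$, $a\coloneqq \frac{12L\gamma ^3}{\delta }$ and $c\coloneqq \frac{\gamma \mu}{2}$.
   Context: Setting: distributed optimization $f^\star=\min_{x\in\mathbb{R}^d} f(x)$, $f(x)=\frac1n\sum_{i=1}^n f_i(x)$, with minimizer $x^\star$. Each client $i$ has a stochastic gradient oracle $g^i(x)$ with $\mathbb{E}[g^i(x)]=\nabla f_i(x)$ and $\mathbb{E}\|g^i(x)-\nabla f_i(x)\|^2\le\sigma^2$. $\mathcal{C}_\delta$ is a contractive compressor: $\mathbb{E}\|\mathcal{C}_\delta(x)-x\|^2\le(1-\delta)\|x\|^2$ for all $x$, $0<\delta\le1$. $\mu$-strong quasi-convexity around $x^\star$ means $f(x^\star)\ge f(y)+\langle\nabla f(y),x^\star-y\rangle+\frac{\mu}{2}\|x^\star-y\|^2$ for all $y$. EC-Approximate: given fixed vectors $h^i$ and $h=\frac1n\sum_i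 h^i$, start from $x_0$, $e_0^i=0$; at each iteration client $i$ computes $g_t^i=g^i(x_t)$, $\hat\Delta_t^i=\mathcal{C}_\delta(e_t^i+g_t^i-h^i)$, $e_{t+1}^i=e_t^i+g_t^i-h^i-\hat\Delta_t^i$, sends $\hat\Delta_t^i$; the server updates $x_{t+1}=x_t-\gamma h-\frac{\gamma}{n}\sum_i\hat\Delta_t^i$. Notation: $F_t=\mathbb{E}[f(x_t)]-f^\star$, $E_t=\frac1n\sum_i\mathbb{E}\|e_t^i\|^2$, $X_t=\mathbb{E}\|\tilde x_t-x^\star\|^2$ where the virtual iterates are $\tilde x_0=x_0$, $\tilde x_{t+1}=\tilde x_t-\frac{\gamma}{n}\sum_i g_t^i$. *)

theory Defs
  imports "HOL-Analysis.Analysis" "HOL-Probability.Probability"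
begin

text \<open>Virtual iterates of EC-Approximate:
  tilde x_0 = x_0,  tilde x_{t+1} = tilde x_t - (gamma/n) * sum_i g_t^i.
  Here g i t w is the stochastic gradient of client i at iteration t, at sample point w.\<close>
fun virt_iter :: "nat \<Rightarrow> real \<Rightarrow> 'a::real_vector \<Rightarrow> (nat \<Rightarrow> nat \<Rightarrow> 'w \<Rightarrow> 'a) \<Rightarrow> nat \<Rightarrow> 'w \<Rightarrow> 'a" where
  "virt_iter n \<gamma> x0 g 0 w = x0"
| "virt_iter n \<gamma> x0 g (Suc t) w =
     virt_iter n \<gamma> x0 g t w - (\<gamma> / real n) *\<^sub>R (\<Sum>i<n. g i t w)"

definition strongly_quasi_convex_around ::
  "real \<Rightarrow> ('a::real_inner \<Rightarrow> real) \<Rightarrow> ('a \<Rightarrow> 'a) \<Rightarrow> 'a \<Rightarrow> bool" where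
  "strongly_quasi_convex_around \<mu> f df xs \<longleftrightarrow>
     (\<forall>y. f xs \<ge> f y + inner (df y) (xs - y) + \<mu> / 2 * (norm (xs - y))\<^sup>2)"

definition L_smooth :: "real \<Rightarrow> ('a::real_inner \<Rightarrow> real) \<Rightarrow> ('a \<Rightarrow> 'a) \<Rightarrow> bool" where
  "L_smooth L f df \<longleftrightarrow>
     (\<forall>x. (f has_derivative (\<lambda>v. inner (df x) v)) (at x)) \<and>
     (\<forall>x y. norm (df x - df y) \<le> L * norm (x - y))"

end

theory Submission
  imports Defs
begin

lemma descent:
  fixes \<phi> :: "'a::real_inner \<Rightarrow> real"
  assumes der: "\<And>x. (\<phi> has_derivative (\<lambda>v. inner (d\<phi> x) v)) (at x)"
    and lip: "\<And>x y. norm (d\<phi> x - d\<phi> y) \<le> L * norm (x - y)"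
  shows "\<phi> y \<le> \<phi> x + inner (d\<phi> x) (y - x) + L / 2 * (norm (y - x))\<^sup>2"
proof -
  define v where "v = y - x"
  define \<psi> where "\<psi> = (\<lambda>t. \<phi> (x + t *\<^sub>R v) - t * inner (d\<phi> x) v - L / 2 * t\<^sup>2 * (norm v)\<^sup>2)"
  have D: "(\<psi> has_real_derivative (inner (d\<phi> (x + t *\<^sub>R v)) v - inner (d\<phi> x) v - L * t * (norm v)\<^sup>2)) (at t)" for t
  proof -
    have l: "((\<lambda>t. x + t *\<^sub>R v) has_derivative (\<lambda>s. s *\<^sub>R v)) (at t)"
      by (auto intro!: derivative_eq_intros)
    have c: "((\<lambda>t. \<phi> (x + t *\<^sub>R v)) has_derivative (\<lambda>s. inner (d\<phi> (x + t *\<^sub>R v)) (s *\<^sub>R v))) (at t)"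
      using has_derivative_compose[OF l der] by (simp add: o_def)
    have e: "(\<lambda>s. inner (d\<phi> (x + t *\<^sub>R v)) (s *\<^sub>R v)) = (*) (inner (d\<phi> (x + t *\<^sub>R v)) v)"
      by (rule ext) simp
    have c': "((\<lambda>t. \<phi> (x + t *\<^sub>R v)) has_real_derivative (inner (d\<phi> (x + t *\<^sub>R v)) v)) (at t)"
      unfolding has_field_derivative_def using c unfolding e .
    show ?thesis unfolding \<psi>_def
      by (rule derivative_eq_intros c' | simp)+
  qed
  have "\<psi> 1 \<le> \<psi> 0"
  proof (rule DERIV_nonpos_imp_nonincreasing[of 0 1 \<psi>])
    fix t :: real assume t: "0 \<le> t" "t \<le> 1"
    have "inner (d\<phi> (x + t *\<^sub>R v)) v - inner (d\<phi> x) v = inner (d\<phi> (x + t *\<^sub>R v) - d\<phi> x) v"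
      by (simp add: inner_diff_left)
    also have "\<dots> \<le> norm (d\<phi> (x + t *\<^sub>R v) - d\<phi> x) * norm v" by (rule norm_cauchy_schwarz)
    also have "\<dots> \<le> L * norm (t *\<^sub>R v) * norm v"
      using lip[of "x + t *\<^sub>R v" x] by (intro mult_right_mono) auto
    also have "\<dots> = L * t * (norm v)\<^sup>2" using t by (simp add: power2_eq_square)
    finally show "\<exists>y. DERIV \<psi> t :> y \<and> y \<le> 0" using D[of t] by (intro exI[of _ _]) auto
  qed auto
  thus ?thesis unfolding \<psi>_def v_def by simp
qed

lemma convex_grad:
  fixes \<phi> :: "'a::real_inner \<Rightarrow> real"
  assumes cv: "convex_on UNIV \<phi>"
    and der: "(\<phi> has_derivative (\<lambda>v. inner g v)) (at x)"
  shows "\<phi> y \<ge> \<phi> x + inner g (y - x)"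
proof -
  define v where "v = y - x"
  define \<psi> where "\<psi> = (\<lambda>t::real. \<phi> (x + t *\<^sub>R v))"
  have cvx: "convex_on UNIV \<psi>"
  proof (rule convex_onI)
    fix t a b :: real assume "t > 0" "t < 1"
    have "x + ((1 - t) *\<^sub>R a + t *\<^sub>R b) *\<^sub>R v = (1 - t) *\<^sub>R (x + a *\<^sub>R v) + t *\<^sub>R (x + b *\<^sub>R v)"
      by (simp add: algebra_simps)
    then show "\<psi> ((1 - t) *\<^sub>R a + t *\<^sub>R b) \<le> (1 - t) * \<psi> a + t * \<psi> b"
      unfolding \<psi>_def using convex_onD[OF cv, of t "x + a *\<^sub>R v" "x + b *\<^sub>R v"] \<open>t>0\<close> \<open>t<1\<close> by simp
  qed simp
  have l: "((\<lambda>t. x + t *\<^sub>R v) has_derivative (\<lambda>s. s *\<^sub>R v)) (at 0)"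
    by (auto intro!: derivative_eq_intros)
  have der': "(\<phi> has_derivative (\<lambda>v. inner g v)) (at (x + 0 *\<^sub>R v))" using der by simp
  have c: "(\<psi> has_derivative (\<lambda>s. inner g (s *\<^sub>R v))) (at 0)"
    using has_derivative_compose[OF l der'] unfolding \<psi>_def by (simp add: o_def)
  have e: "(\<lambda>s. inner g (s *\<^sub>R v)) = (*) (inner g v)" by (rule ext) simp
  have c': "(\<psi> has_real_derivative (inner g v)) (at 0 within UNIV)"
    unfolding has_field_derivative_def using c unfolding e by simp
  have "\<psi> 1 - \<psi> 0 \<ge> inner g v * (1 - 0)"
    by (rule convex_on_imp_above_tangent[OF cvx _ _ _ c']) auto
  thus ?thesis unfolding \<psi>_def v_def by simp
qed

lemma ab_le_sq: "(a::real) * b \<le> a\<^sup>2 + b\<^sup>2"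
proof -
  have "0 \<le> (a - b)\<^sup>2" by simp
  hence "2 * (a * b) \<le> a\<^sup>2 + b\<^sup>2" by (simp add: power2_eq_square algebra_simps)
  moreover have "0 \<le> a\<^sup>2 + b\<^sup>2" by simp
  ultimately show ?thesis by linarith
qed

definition L2 :: "'w measure \<Rightarrow> ('w \<Rightarrow> 'a::euclidean_space) \<Rightarrow> bool" where
  "L2 M u \<longleftrightarrow> u \<in> borel_measurable M \<and> integrable M (\<lambda>w. (norm (u w))\<^sup>2)"

lemma L2_inner:
  assumes "L2 M u" "L2 M v"
  shows "integrable M (\<lambda>w. inner (u w) (v w))"
proof (rule Bochner_Integration.integrable_bound[where f="\<lambda>w. (norm (u w))\<^sup>2 + (norm (v w))\<^sup>2"])
  show "integrable M (\<lambda>w. (norm (u w))\<^sup>2 + (norm (v w))\<^sup>2)"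
    using assms unfolding L2_def by auto
  show "(\<lambda>w. inner (u w) (v w)) \<in> borel_measurable M" using assms unfolding L2_def by auto
  show "AE w in M. norm (inner (u w) (v w)) \<le> norm ((norm (u w))\<^sup>2 + (norm (v w))\<^sup>2)"
  proof (rule AE_I2)
    fix w
    have "\<bar>inner (u w) (v w)\<bar> \<le> norm (u w) * norm (v w)" by (rule Cauchy_Schwarz_ineq2)
    also have "\<dots> \<le> (norm (u w))\<^sup>2 + (norm (v w))\<^sup>2"
      by (rule ab_le_sq)
    finally show "norm (inner (u w) (v w)) \<le> norm ((norm (u w))\<^sup>2 + (norm (v w))\<^sup>2)" by simp
  qed
qed

lemma L2_bound:
  assumes "L2 M u" "v \<in> borel_measurable M" "\<And>w. w \<in> space M \<Longrightarrow> norm (v w) \<le> norm (u w)"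
  shows "L2 M v"
  unfolding L2_def
proof
  show "v \<in> borel_measurable M" by fact
  show "integrable M (\<lambda>w. (norm (v w))\<^sup>2)"
  proof (rule Bochner_Integration.integrable_bound[where f="\<lambda>w. (norm (u w))\<^sup>2"])
    show "integrable M (\<lambda>w. (norm (u w))\<^sup>2)" using assms unfolding L2_def by auto
    show "(\<lambda>w. (norm (v w))\<^sup>2) \<in> borel_measurable M" using assms by auto
    show "AE w in M. norm ((norm (v w))\<^sup>2) \<le> norm ((norm (u w))\<^sup>2)"
      using assms(3) by (auto intro!: AE_I2 power_mono)
  qed
qed

lemma L2_add:
  assumes "L2 M u" "L2 M v"
  shows "L2 M (\<lambda>w. u w + v w)"
  unfolding L2_def
proof
  show m: "(\<lambda>w. u w + v w) \<in> borel_measurable M" using assms unfolding L2_def by auto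
  have "integrable M (\<lambda>w. (norm (u w))\<^sup>2 + 2 * inner (u w) (v w) + (norm (v w))\<^sup>2)"
    using assms L2_inner[OF assms] unfolding L2_def by auto
  moreover have "(norm (u w + v w))\<^sup>2 = (norm (u w))\<^sup>2 + 2 * inner (u w) (v w) + (norm (v w))\<^sup>2" for w
    by (simp add: power2_norm_eq_inner algebra_simps inner_commute)
  ultimately show "integrable M (\<lambda>w. (norm (u w + v w))\<^sup>2)" by simp
qed

lemma L2_scale:
  assumes "L2 M u"
  shows "L2 M (\<lambda>w. c *\<^sub>R u w)"
  using assms unfolding L2_def by (auto simp: power_mult_distrib)

lemma L2_uminus:
  assumes "L2 M u"
  shows "L2 M (\<lambda>w. - u w)"
  using L2_scale[OF assms, of "-1"] by simp

lemma L2_diff: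
  assumes "L2 M u" "L2 M v"
  shows "L2 M (\<lambda>w. u w - v w)"
  using L2_add[OF assms(1) L2_uminus[OF assms(2)]] by simp

lemma L2_const:
  assumes "finite_measure M"
  shows "L2 M (\<lambda>w. c)"
  unfolding L2_def using finite_measure.integrable_const[OF assms] by auto

lemma L2_sum:
  assumes "finite_measure M" "\<And>i. i \<in> I \<Longrightarrow> L2 M (u i)"
  shows "L2 M (\<lambda>w. \<Sum>i\<in>I. u i w)"
  using assms(2)
proof (induction I rule: infinite_finite_induct)
  case (infinite A) then show ?case using L2_const[OF assms(1)] by simp
next
  case empty then show ?case using L2_const[OF assms(1)] by simp
next
  case (insert a A) then show ?case using L2_add[of M "u a" "\<lambda>w. \<Sum>i\<in>A. u i w"] by simp
qed

lemma L2_bound2: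
  assumes "finite_measure M" "L2 M u" "v \<in> borel_measurable M"
    "\<And>w. w \<in> space M \<Longrightarrow> norm (v w) \<le> C + K * norm (u w)"
  shows "L2 M v"
  unfolding L2_def
proof
  show "v \<in> borel_measurable M" by fact
  show "integrable M (\<lambda>w. (norm (v w))\<^sup>2)"
  proof (rule Bochner_Integration.integrable_bound[where f="\<lambda>w. 2 * C\<^sup>2 + 2 * K\<^sup>2 * (norm (u w))\<^sup>2"])
    show "integrable M (\<lambda>w. 2 * C\<^sup>2 + 2 * K\<^sup>2 * (norm (u w))\<^sup>2)"
      using assms finite_measure.integrable_const[OF assms(1)] unfolding L2_def
      by (intro Bochner_Integration.integrable_add integrable_mult_right) auto
    show "(\<lambda>w. (norm (v w))\<^sup>2) \<in> borel_measurable M" using assms by auto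
    show "AE w in M. norm ((norm (v w))\<^sup>2) \<le> norm (2 * C\<^sup>2 + 2 * K\<^sup>2 * (norm (u w))\<^sup>2)"
    proof (rule AE_I2)
      fix w assume w: "w \<in> space M"
      have "(norm (v w))\<^sup>2 \<le> (C + K * norm (u w))\<^sup>2"
        using assms(4)[OF w] by (intro power_mono) auto
      also have "\<dots> \<le> 2 * C\<^sup>2 + 2 * K\<^sup>2 * (norm (u w))\<^sup>2"
      proof -
        have "0 \<le> (C - K * norm (u w))\<^sup>2" by simp
        thus ?thesis by (simp add: power2_eq_square algebra_simps)
      qed
      finally show "norm ((norm (v w))\<^sup>2) \<le> norm (2 * C\<^sup>2 + 2 * K\<^sup>2 * (norm (u w))\<^sup>2)" by simp
    qed
  qed
qed

lemma L2_norm2: "L2 M u \<Longrightarrow> integrable M (\<lambda>w. (norm (u w))\<^sup>2)"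
  unfolding L2_def by auto

lemma L2_meas: "L2 M u \<Longrightarrow> u \<in> borel_measurable M"
  unfolding L2_def by auto

lemma CE_le:
  assumes "prob_space M" "subalgebra M F" "integrable M \<phi>" "integrable M c"
    "AE w in M. real_cond_exp M F \<phi> w \<le> c w"
  shows "integral\<^sup>L M \<phi> \<le> integral\<^sup>L M c"
proof -
  interpret finite_measure_subalgebra M F
    using assms(1,2) by (simp add: finite_measure_subalgebra_def finite_measure_subalgebra_axioms_def prob_space_def)
  have "integral\<^sup>L M \<phi> = integral\<^sup>L M (real_cond_exp M F \<phi>)" using real_cond_exp_int(2)[OF assms(3)] by simp
  also have "\<dots> \<le> integral\<^sup>L M c"
    by (rule integral_mono_AE[OF real_cond_exp_int(1)[OF assms(3)] assms(4,5)])
  finally show ?thesis .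
qed

lemma CE_eq0:
  assumes "prob_space M" "subalgebra M F" "integrable M \<phi>"
    "AE w in M. real_cond_exp M F \<phi> w = 0"
  shows "integral\<^sup>L M \<phi> = 0"
proof -
  interpret finite_measure_subalgebra M F
    using assms(1,2) by (simp add: finite_measure_subalgebra_def finite_measure_subalgebra_axioms_def prob_space_def)
  have "integral\<^sup>L M \<phi> = integral\<^sup>L M (real_cond_exp M F \<phi>)" using real_cond_exp_int(2)[OF assms(3)] by simp
  also have "\<dots> = integral\<^sup>L M (\<lambda>w. 0)"
    by (rule integral_cong_AE) (use assms(4) in auto)
  finally show ?thesis by simp
qed

lemma CE_unbiased:
  fixes g p U :: "'w \<Rightarrow> 'a::euclidean_space"
  assumes "prob_space M" "subalgebra M F" "L2 M g" "L2 M p" "L2 M U" "U \<in> borel_measurable F"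
    and unb: "\<And>v. AE w in M. real_cond_exp M F (\<lambda>w. inner (g w) v) w = inner (p w) v"
  shows "integral\<^sup>L M (\<lambda>w. inner (g w - p w) (U w)) = 0"
proof -
  interpret finite_measure_subalgebra M F
    using assms(1,2) by (simp add: finite_measure_subalgebra_def finite_measure_subalgebra_axioms_def prob_space_def)
  have int: "integrable M (\<lambda>w. inner (U w) b * inner (q w) b)" if "L2 M q" "b \<in> Basis" for q b
  proof (rule Bochner_Integration.integrable_bound[where f="\<lambda>w. (norm (U w))\<^sup>2 + (norm (q w))\<^sup>2"])
    show "integrable M (\<lambda>w. (norm (U w))\<^sup>2 + (norm (q w))\<^sup>2)"
      using assms that unfolding L2_def by auto
    show "(\<lambda>w. inner (U w) b * inner (q w) b) \<in> borel_measurable M" using assms that unfolding L2_def by auto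
    show "AE w in M. norm (inner (U w) b * inner (q w) b) \<le> norm ((norm (U w))\<^sup>2 + (norm (q w))\<^sup>2)"
    proof (rule AE_I2)
      fix w
      have "\<bar>inner (U w) b * inner (q w) b\<bar> \<le> norm (U w) * norm (q w)"
        unfolding abs_mult by (intro mult_mono Basis_le_norm that) auto
      also have "\<dots> \<le> (norm (U w))\<^sup>2 + (norm (q w))\<^sup>2"
        by (rule ab_le_sq)
      finally show "norm (inner (U w) b * inner (q w) b) \<le> norm ((norm (U w))\<^sup>2 + (norm (q w))\<^sup>2)" by simp
    qed
  qed
  have Ub: "(\<lambda>w. inner (U w) b) \<in> borel_measurable F" for b using assms(6) by measurable
  have eqb: "integral\<^sup>L M (\<lambda>w. inner (U w) b * inner (g w) b) = integral\<^sup>L M (\<lambda>w. inner (U w) b * inner (p w) b)"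
    if b: "b \<in> Basis" for b
  proof -
    have "integral\<^sup>L M (\<lambda>w. inner (U w) b * inner (g w) b)
        = integral\<^sup>L M (\<lambda>w. inner (U w) b * real_cond_exp M F (\<lambda>w. inner (g w) b) w)"
      by (rule real_cond_exp_intg(2)[symmetric, OF int[OF assms(3) b] Ub])
        (use assms(3) in \<open>auto simp: L2_def\<close>)
    also have "\<dots> = integral\<^sup>L M (\<lambda>w. inner (U w) b * inner (p w) b)"
      by (rule integral_cong_AE) (use unb[of b] assms(3,4,5) Ub in \<open>auto simp: L2_def\<close>)
    finally show ?thesis .
  qed
  have split: "integral\<^sup>L M (\<lambda>w. inner (q w) (U w)) = (\<Sum>b\<in>Basis. integral\<^sup>L M (\<lambda>w. inner (U w) b * inner (q w) b))"
    if "L2 M q" for q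
  proof -
    have "integral\<^sup>L M (\<lambda>w. inner (q w) (U w)) = integral\<^sup>L M (\<lambda>w. \<Sum>b\<in>Basis. inner (U w) b * inner (q w) b)"
      by (subst euclidean_inner) (simp add: mult.commute)
    also have "\<dots> = (\<Sum>b\<in>Basis. integral\<^sup>L M (\<lambda>w. inner (U w) b * inner (q w) b))"
      by (rule Bochner_Integration.integral_sum) (use int[OF that] in auto)
    finally show ?thesis .
  qed
  have "integral\<^sup>L M (\<lambda>w. inner (g w - p w) (U w)) = integral\<^sup>L M (\<lambda>w. inner (g w) (U w)) - integral\<^sup>L M (\<lambda>w. inner (p w) (U w))"
    using L2_inner[OF assms(3,5)] L2_inner[OF assms(4,5)] by (simp add: inner_diff_left)
  also have "\<dots> = 0" using split[OF assms(3)] split[OF assms(4)] eqb by simp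
  finally show ?thesis .
qed

lemma cocoercive:
  fixes \<phi> :: "'a::real_inner \<Rightarrow> real"
  assumes sm: "L_smooth L \<phi> d\<phi>" and cv: "convex_on UNIV \<phi>" and L: "L > 0"
  shows "(norm (d\<phi> x - d\<phi> y))\<^sup>2 \<le> 2 * L * (\<phi> x - \<phi> y - inner (d\<phi> y) (x - y))"
proof -
  have der: "\<And>x. (\<phi> has_derivative (\<lambda>v. inner (d\<phi> x) v)) (at x)"
    and lip: "\<And>x y. norm (d\<phi> x - d\<phi> y) \<le> L * norm (x - y)"
    using sm unfolding L_smooth_def by auto
  define ch where "ch = (\<lambda>z. \<phi> z - inner (d\<phi> y) z)"
  define dch where "dch = (\<lambda>z. d\<phi> z - d\<phi> y)"
  have derc: "(ch has_derivative (\<lambda>v. inner (dch z) v)) (at z)" for z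
  proof -
    have "(ch has_derivative (\<lambda>v. inner (d\<phi> z) v - inner (d\<phi> y) v)) (at z)"
      unfolding ch_def by (intro has_derivative_diff der bounded_linear.has_derivative[OF bounded_linear_inner_right] has_derivative_ident)
    then show ?thesis unfolding dch_def by (simp add: inner_diff_left)
  qed
  have lipc: "norm (dch a - dch b) \<le> L * norm (a - b)" for a b
    unfolding dch_def using lip[of a b] by simp
  have cvc: "convex_on UNIV ch"
  proof (rule convex_onI)
    fix t :: real and a b assume "0 < t" "t < 1"
    then show "ch ((1 - t) *\<^sub>R a + t *\<^sub>R b) \<le> (1 - t) * ch a + t * ch b"
      unfolding ch_def using convex_onD[OF cv, of t a b]
      by (simp add: inner_add_right algebra_simps)
  qed simp
  have miny: "ch y \<le> ch z" for z
    using convex_grad[OF cvc derc[of y], of z] by (simp add: dch_def)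
  define z where "z = x - (1 / L) *\<^sub>R dch x"
  have "ch z \<le> ch x + inner (dch x) (z - x) + L / 2 * (norm (z - x))\<^sup>2"
    by (rule descent[OF derc lipc])
  also have "\<dots> = ch x - (norm (dch x))\<^sup>2 / (2 * L)"
  proof -
    have zx: "z - x = (- 1 / L) *\<^sub>R dch x" unfolding z_def by simp
    show ?thesis unfolding zx using L
      by (simp add: dot_square_norm power_mult_distrib power2_eq_square field_simps)
  qed
  finally have a: "ch z \<le> ch x - (norm (dch x))\<^sup>2 / (2 * L)" .
  have "(norm (dch x))\<^sup>2 \<le> 2 * L * (ch x - ch y)"
  proof -
    have "(norm (dch x))\<^sup>2 / (2 * L) \<le> ch x - ch y" using a miny[of z] by linarith
    then show ?thesis using L by (simp add: field_simps)
  qed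
  then show ?thesis unfolding dch_def ch_def by (simp add: inner_diff_right algebra_simps)
qed

lemma mean_sq:
  fixes a :: "nat \<Rightarrow> 'a::real_inner"
  assumes n: "n \<ge> 1"
  shows "(norm ((1 / real n) *\<^sub>R (\<Sum>i<n. a i)))\<^sup>2 \<le> (1 / real n) * (\<Sum>i<n. (norm (a i))\<^sup>2)"
proof -
  define m where "m = (1 / real n) *\<^sub>R (\<Sum>i<n. a i)"
  have S: "(\<Sum>i<n. a i) = real n *\<^sub>R m" unfolding m_def using n by simp
  have "0 \<le> (\<Sum>i<n. (norm (a i - m))\<^sup>2)" by (simp add: sum_nonneg)
  also have "\<dots> = (\<Sum>i<n. (norm (a i))\<^sup>2 - 2 * inner (a i) m + (norm m)\<^sup>2)"
    by (intro sum.cong refl) (simp add: power2_norm_eq_inner inner_diff_left inner_diff_right inner_commute algebra_simps)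
  also have "\<dots> = (\<Sum>i<n. (norm (a i))\<^sup>2) - 2 * inner (\<Sum>i<n. a i) m + real n * (norm m)\<^sup>2"
    by (simp add: sum.distrib sum_subtractf inner_sum_left sum_distrib_left)
  also have "\<dots> = (\<Sum>i<n. (norm (a i))\<^sup>2) - real n * (norm m)\<^sup>2"
    unfolding S by (simp add: power2_norm_eq_inner)
  finally have "real n * (norm m)\<^sup>2 \<le> (\<Sum>i<n. (norm (a i))\<^sup>2)" by simp
  then show ?thesis unfolding m_def[symmetric] using n by (simp add: field_simps)
qed

lemma young:
  fixes a b :: "'a::real_inner"
  assumes "\<beta> > 0"
  shows "(norm (a + b))\<^sup>2 \<le> (1 + \<beta>) * (norm a)\<^sup>2 + (1 + 1 / \<beta>) * (norm b)\<^sup>2"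
proof -
  have "2 * inner a b \<le> 2 * (norm a * norm b)" using norm_cauchy_schwarz[of a b] by simp
  also have "\<dots> \<le> \<beta> * (norm a)\<^sup>2 + (1 / \<beta>) * (norm b)\<^sup>2"
  proof -
    have "0 \<le> (\<beta> * norm a - norm b)\<^sup>2 / \<beta>" using assms by simp
    also have "\<dots> = \<beta> * (norm a)\<^sup>2 + (1 / \<beta>) * (norm b)\<^sup>2 - 2 * (norm a * norm b)"
      using assms by (simp add: power2_eq_square field_simps)
    finally show ?thesis by simp
  qed
  finally have "2 * inner a b \<le> \<beta> * (norm a)\<^sup>2 + (1 / \<beta>) * (norm b)\<^sup>2" .
  moreover have "(norm (a + b))\<^sup>2 = (norm a)\<^sup>2 + 2 * inner a b + (norm b)\<^sup>2"
    by (simp add: power2_norm_eq_inner inner_add_left inner_add_right inner_commute)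
  ultimately show ?thesis by (simp add: algebra_simps)
qed

lemma two_ab_le: "c > 0 \<Longrightarrow> 2 * ((a::real) * b) \<le> c * a\<^sup>2 + b\<^sup>2 / c"
proof -
  assume c: "c > 0"
  have "0 \<le> (c * a - b)\<^sup>2 / c" using c by simp
  also have "\<dots> = c * a\<^sup>2 + b\<^sup>2 / c - 2 * (a * b)"
    using c by (simp add: power2_eq_square field_simps)
  finally show ?thesis by simp
qed

lemma xbound:
  fixes Xv Vv ev d xs :: "'a::real_inner"
  assumes V: "Vv = Xv + \<gamma> *\<^sub>R ev"
    and sq: "inner d (Xv - xs) \<ge> \<Phi> + \<mu> / 2 * (norm (Xv - xs))\<^sup>2"
    and dn: "(norm d)\<^sup>2 \<le> 2 * L * \<Phi>"
    and pos: "\<Phi> \<ge> 0" "\<mu> \<le> 2 * L" "\<gamma> > 0" "L > 0" "\<mu> > 0"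
  shows "(norm (Vv - xs))\<^sup>2 - 2 * \<gamma> * inner (Vv - xs) d + \<gamma>\<^sup>2 * (norm d)\<^sup>2
    \<le> (1 - \<gamma> * \<mu> / 2) * (norm (Vv - xs))\<^sup>2 - \<gamma> * (1 - 2 * L * \<gamma>) * \<Phi> + 4 * L * \<gamma>^3 * (norm ev)\<^sup>2"
proof -
  define a where "a = Xv - xs"
  define r where "r = (norm (Vv - xs))\<^sup>2"
  have Va: "Vv - xs = a + \<gamma> *\<^sub>R ev" unfolding a_def V by simp
  have i1: "inner (Vv - xs) d = inner a d + \<gamma> * inner ev d"
    unfolding Va by (simp add: inner_add_left)
  have i2: "- 2 * \<gamma> * inner a d \<le> - 2 * \<gamma> * \<Phi> - \<gamma> * \<mu> * (norm a)\<^sup>2"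
  proof -
    have "\<gamma> * (\<Phi> + \<mu> / 2 * (norm a)\<^sup>2) \<le> \<gamma> * inner a d"
      using sq pos unfolding a_def by (simp add: inner_commute)
    then show ?thesis by (simp add: algebra_simps)
  qed
  have "r \<le> (1 + 1) * (norm a)\<^sup>2 + (1 + 1 / 1) * (norm (\<gamma> *\<^sub>R ev))\<^sup>2"
    unfolding r_def Va by (rule young) simp
  hence i3: "r \<le> 2 * (norm a)\<^sup>2 + 2 * \<gamma>\<^sup>2 * (norm ev)\<^sup>2" by (simp add: power_mult_distrib)
  have i3': "- \<gamma> * \<mu> * (norm a)\<^sup>2 \<le> - \<gamma> * \<mu> / 2 * r + \<gamma>^3 * \<mu> * (norm ev)\<^sup>2"
  proof -
    have "\<gamma> * \<mu> * r \<le> \<gamma> * \<mu> * (2 * (norm a)\<^sup>2 + 2 * \<gamma>\<^sup>2 * (norm ev)\<^sup>2)"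
      using i3 pos by (intro mult_left_mono) auto
    then show ?thesis by (simp add: algebra_simps power2_eq_square power3_eq_cube)
  qed
  have i4: "- 2 * \<gamma>\<^sup>2 * inner ev d \<le> 2 * L * \<gamma>^3 * (norm ev)\<^sup>2 + \<gamma> / (2 * L) * (norm d)\<^sup>2"
  proof -
    have "- inner ev d \<le> norm ev * norm d"
      using Cauchy_Schwarz_ineq2[of ev d] by linarith
    hence "(2 * \<gamma>\<^sup>2) * (- inner ev d) \<le> (2 * \<gamma>\<^sup>2) * (norm ev * norm d)"
      by (intro mult_left_mono) auto
    hence "- 2 * \<gamma>\<^sup>2 * inner ev d \<le> \<gamma> * (2 * ((\<gamma> * norm ev) * norm d))"
      by (simp add: power2_eq_square algebra_simps)
    also have "\<dots> \<le> \<gamma> * ((2 * L) * (\<gamma> * norm ev)\<^sup>2 + (norm d)\<^sup>2 / (2 * L))"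
      using two_ab_le[of "2 * L" "\<gamma> * norm ev" "norm d"] pos by (intro mult_left_mono) auto
    also have "\<dots> = 2 * L * \<gamma>^3 * (norm ev)\<^sup>2 + \<gamma> / (2 * L) * (norm d)\<^sup>2"
      by (simp add: power2_eq_square power3_eq_cube algebra_simps)
    finally show ?thesis .
  qed
  have i5: "\<gamma> / (2 * L) * (norm d)\<^sup>2 \<le> \<gamma> * \<Phi>"
  proof -
    have "\<gamma> / (2 * L) * (norm d)\<^sup>2 \<le> \<gamma> / (2 * L) * (2 * L * \<Phi>)"
      using dn pos by (intro mult_left_mono) auto
    then show ?thesis using pos by simp
  qed
  have i6: "\<gamma>\<^sup>2 * (norm d)\<^sup>2 \<le> \<gamma>\<^sup>2 * (2 * L * \<Phi>)"
    using dn by (intro mult_left_mono) auto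
  have i7: "\<gamma>^3 * \<mu> * (norm ev)\<^sup>2 \<le> \<gamma>^3 * (2 * L) * (norm ev)\<^sup>2"
    using pos by (intro mult_right_mono mult_left_mono) auto
  have "(norm (Vv - xs))\<^sup>2 - 2 * \<gamma> * inner (Vv - xs) d + \<gamma>\<^sup>2 * (norm d)\<^sup>2
      = r - 2 * \<gamma> * inner a d - 2 * \<gamma>\<^sup>2 * inner ev d + \<gamma>\<^sup>2 * (norm d)\<^sup>2"
    unfolding i1 r_def by (simp add: algebra_simps power2_eq_square)
  also have "\<dots> \<le> (1 - \<gamma> * \<mu> / 2) * r - \<gamma> * (1 - 2 * L * \<gamma>) * \<Phi> + 4 * L * \<gamma>^3 * (norm ev)\<^sup>2"
    using i2 i3' i4 i5 i6 i7 by (simp add: algebra_simps power2_eq_square)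
  finally show ?thesis unfolding r_def .
qed

lemma ebound:
  fixes e k \<xi> :: "'a::real_inner"
  assumes d: "0 < \<delta>" "\<delta> \<le> 1"
  shows "(1 - \<delta>) * (norm (e + k + \<xi>))\<^sup>2 \<le> (1 - \<delta> / 2) * (norm e)\<^sup>2 + (2 / \<delta>) * (norm k)\<^sup>2
     + 2 * (1 - \<delta>) * inner (e + k) \<xi> + (norm \<xi>)\<^sup>2"
proof -
  have eq: "(norm (e + k + \<xi>))\<^sup>2 = (norm (e + k))\<^sup>2 + 2 * inner (e + k) \<xi> + (norm \<xi>)\<^sup>2"
    by (simp add: power2_norm_eq_inner inner_add_left inner_add_right inner_commute)
  have y: "(norm (e + k))\<^sup>2 \<le> (1 + \<delta> / 2) * (norm e)\<^sup>2 + (1 + 1 / (\<delta> / 2)) * (norm k)\<^sup>2"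
    by (rule young) (use d in simp)
  have m: "(1 - \<delta>) * (norm (e + k))\<^sup>2 \<le> (1 - \<delta>) * ((1 + \<delta> / 2) * (norm e)\<^sup>2 + (1 + 1 / (\<delta> / 2)) * (norm k)\<^sup>2)"
    using y d by (intro mult_left_mono) auto
  have c1: "(1 - \<delta>) * (1 + \<delta> / 2) \<le> 1 - \<delta> / 2"
    using d by (simp add: algebra_simps)
  have c2: "(1 - \<delta>) * (1 + 1 / (\<delta> / 2)) \<le> 2 / \<delta>"
    using d by (simp add: field_simps)
  have c1': "(1 - \<delta>) * (1 + \<delta> / 2) * (norm e)\<^sup>2 \<le> (1 - \<delta> / 2) * (norm e)\<^sup>2"
    using c1 by (intro mult_right_mono) auto
  have c2': "(1 - \<delta>) * (1 + 1 / (\<delta> / 2)) * (norm k)\<^sup>2 \<le> 2 / \<delta> * (norm k)\<^sup>2"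
    using c2 by (intro mult_right_mono) auto
  have c3: "(1 - \<delta>) * (norm \<xi>)\<^sup>2 \<le> (norm \<xi>)\<^sup>2"
    using d by (simp add: algebra_simps)
  have e1: "(1 - \<delta>) * ((norm (e + k))\<^sup>2 + 2 * inner (e + k) \<xi> + (norm \<xi>)\<^sup>2)
     = (1 - \<delta>) * (norm (e + k))\<^sup>2 + 2 * (1 - \<delta>) * inner (e + k) \<xi> + (1 - \<delta>) * (norm \<xi>)\<^sup>2"
    by (simp add: algebra_simps)
  have e2: "(1 - \<delta>) * ((1 + \<delta> / 2) * (norm e)\<^sup>2 + (1 + 1 / (\<delta> / 2)) * (norm k)\<^sup>2)
     = (1 - \<delta>) * (1 + \<delta> / 2) * (norm e)\<^sup>2 + (1 - \<delta>) * (1 + 1 / (\<delta> / 2)) * (norm k)\<^sup>2"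
    by (simp add: algebra_simps)
  show ?thesis unfolding eq e1 using m c1' c2' c3 e2 by linarith
qed

lemma final_arith:
  fixes L \<mu> \<delta> \<gamma> \<alpha> s2 nn X0 X1 E0 E1 F0 :: real
  assumes pos: "L > 0" "\<mu> > 0" "0 < \<delta>" "\<delta> \<le> 1" "\<gamma> > 0" "nn > 0"
    and mu: "\<mu> \<le> 2 * L" and g1: "16 * L * \<gamma> \<le> \<delta>" and g2: "384 * (L * \<gamma>)\<^sup>2 \<le> \<delta>\<^sup>2"
    and nn: "E0 \<ge> 0" "F0 \<ge> 0" "s2 \<ge> 0"
    and hX: "X1 \<le> (1 - \<gamma> * \<mu> / 2) * X0 - \<gamma> * (1 - 2 * L * \<gamma>) * F0 + 4 * L * \<gamma>^3 * E0 + \<gamma>\<^sup>2 * s2 / nn"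
    and hE: "E1 \<le> (1 - \<delta> / 2) * E0 + (2 / \<delta>) * (4 * L * F0 + 2 * \<alpha>) + s2"
  shows "X1 + 12 * L * \<gamma>^3 / \<delta> * E1 \<le> (1 - \<gamma> * \<mu> / 2) * (X0 + 12 * L * \<gamma>^3 / \<delta> * E0) - \<gamma> / 4 * F0
      + \<gamma>\<^sup>2 * s2 / nn + \<gamma>^3 * (48 * L * \<alpha> / \<delta>\<^sup>2 + 12 * L * s2 / \<delta>)"
proof -
  define a where "a = 12 * L * \<gamma>^3 / \<delta>"
  have a0: "a \<ge> 0" unfolding a_def using pos by simp
  have aE: "a * E1 \<le> a * ((1 - \<delta> / 2) * E0 + (2 / \<delta>) * (4 * L * F0 + 2 * \<alpha>) + s2)"
    using hE a0 by (rule mult_left_mono)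
  have aE': "a * ((1 - \<delta> / 2) * E0 + (2 / \<delta>) * (4 * L * F0 + 2 * \<alpha>) + s2)
     = a * (1 - \<delta> / 2) * E0 + (96 * L\<^sup>2 * \<gamma>^3 / \<delta>\<^sup>2) * F0 + \<gamma>^3 * (48 * L * \<alpha> / \<delta>\<^sup>2 + 12 * L * s2 / \<delta>)"
    unfolding a_def using pos by (simp add: field_simps power2_eq_square)
  have c1: "4 * L * \<gamma>^3 + a * (1 - \<delta> / 2) \<le> (1 - \<gamma> * \<mu> / 2) * a"
  proof -
    have "\<gamma> * \<mu> \<le> 2 * L * \<gamma>" using mu pos by simp
    also have "\<dots> \<le> \<delta> / 3" using g1 pos by simp
    finally have gm: "\<gamma> * \<mu> \<le> \<delta> / 3" .
    have "(\<gamma> * \<mu> / 2) * a \<le> (\<delta> / 6) * a" using gm a0 by (intro mult_right_mono) auto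
    moreover have "4 * L * \<gamma>^3 = a * \<delta> / 3" unfolding a_def using pos by simp
    ultimately show ?thesis by (simp add: algebra_simps)
  qed
  have c1': "(4 * L * \<gamma>^3 + a * (1 - \<delta> / 2)) * E0 \<le> ((1 - \<gamma> * \<mu> / 2) * a) * E0"
    using c1 nn by (intro mult_right_mono) auto
  have c2: "- \<gamma> * (1 - 2 * L * \<gamma>) + 96 * L\<^sup>2 * \<gamma>^3 / \<delta>\<^sup>2 \<le> - \<gamma> / 4"
  proof -
    have "96 * L\<^sup>2 * \<gamma>^3 / \<delta>\<^sup>2 = \<gamma> * (96 * (L * \<gamma>)\<^sup>2 / \<delta>\<^sup>2)" using pos by (simp add: field_simps power2_eq_square power3_eq_cube)
    also have "\<dots> \<le> \<gamma> * (1 / 4)"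
      using g2 pos by (intro mult_left_mono) (auto simp: field_simps)
    finally have A: "96 * L\<^sup>2 * \<gamma>^3 / \<delta>\<^sup>2 \<le> \<gamma> / 4" by simp
    have "2 * L * \<gamma> \<le> 1 / 8" using g1 pos by simp
    hence "\<gamma> * (2 * L * \<gamma>) \<le> \<gamma> * (1 / 8)" using pos by (intro mult_left_mono) auto
    moreover have "- \<gamma> * (1 - 2 * L * \<gamma>) = - \<gamma> + \<gamma> * (2 * L * \<gamma>)" by (simp add: algebra_simps)
    ultimately show ?thesis using A pos by linarith
  qed
  have c2': "(- \<gamma> * (1 - 2 * L * \<gamma>) + 96 * L\<^sup>2 * \<gamma>^3 / \<delta>\<^sup>2) * F0 \<le> (- \<gamma> / 4) * F0"
    using c2 nn by (intro mult_right_mono) auto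
  have "X1 + a * E1 \<le> (1 - \<gamma> * \<mu> / 2) * (X0 + a * E0) - \<gamma> / 4 * F0
      + \<gamma>\<^sup>2 * s2 / nn + \<gamma>^3 * (48 * L * \<alpha> / \<delta>\<^sup>2 + 12 * L * s2 / \<delta>)"
  proof -
    have d1: "(4 * L * \<gamma>^3 + a * (1 - \<delta> / 2)) * E0 = 4 * L * \<gamma>^3 * E0 + a * (1 - \<delta> / 2) * E0"
      by (simp add: algebra_simps)
    have d2: "(1 - \<gamma> * \<mu> / 2) * (X0 + a * E0) = (1 - \<gamma> * \<mu> / 2) * X0 + ((1 - \<gamma> * \<mu> / 2) * a) * E0"
      by (simp add: algebra_simps)
    have d3: "(- \<gamma> * (1 - 2 * L * \<gamma>) + 96 * L\<^sup>2 * \<gamma>^3 / \<delta>\<^sup>2) * F0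
       = - (\<gamma> * (1 - 2 * L * \<gamma>) * F0) + (96 * L\<^sup>2 * \<gamma>^3 / \<delta>\<^sup>2) * F0"
      by (simp add: algebra_simps)
    have d4: "(- \<gamma> / 4) * F0 = - (\<gamma> / 4 * F0)" by simp
    show ?thesis using hX aE aE' c1' c2' d1 d2 d3 d4 by linarith
  qed
  then show ?thesis unfolding a_def .
qed

theorem lemma14:
  fixes M :: "'w measure" and Fil G :: "nat \<Rightarrow> 'w measure"
    and n :: nat
    and fi :: "nat \<Rightarrow> 'a::euclidean_space \<Rightarrow> real" and dfi :: "nat \<Rightarrow> 'a \<Rightarrow> 'a"
    and L \<mu> \<sigma> \<delta> \<gamma> \<alpha> :: real
    and xs x0 :: 'a and h :: "nat \<Rightarrow> 'a"
    and x :: "nat \<Rightarrow> 'w \<Rightarrow> 'a"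
    and e g D :: "nat \<Rightarrow> nat \<Rightarrow> 'w \<Rightarrow> 'a"
    and t :: nat
  defines "f \<equiv> (\<lambda>y. (1 / real n) * (\<Sum>i<n. fi i y))"
    and "df \<equiv> (\<lambda>y. (1 / real n) *\<^sub>R (\<Sum>i<n. dfi i y))"
    and "hbar \<equiv> (1 / real n) *\<^sub>R (\<Sum>i<n. h i)"
  assumes M: "prob_space M"
    and n: "n \<ge> 1"
    and L: "L > 0" and mu: "\<mu> > 0"
    and delta: "0 < \<delta>" "\<delta> \<le> 1"
    and gamma: "0 < \<gamma>" "\<gamma> \<le> \<delta> / (8 * sqrt 6 * L)"
    and smooth: "\<And>i. i < n \<Longrightarrow> L_smooth L (fi i) (dfi i)"
    and conv: "\<And>i. i < n \<Longrightarrow> convex_on UNIV (fi i)"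
    and sqc: "strongly_quasi_convex_around \<mu> f df xs"
    and xs_min: "\<And>y. f xs \<le> f y"
    and h_alpha: "(1 / real n) * (\<Sum>i<n. (norm (h i - dfi i xs))\<^sup>2) \<le> \<alpha>"
    (* filtration: Fil s = information before iteration s; G s additionally contains the
       stochastic gradients of iteration s (but not the compressor randomness) *)
    and sub_F: "\<And>s. subalgebra M (Fil s)"
    and sub_G: "\<And>s. subalgebra M (G s)"
    and F_G: "\<And>s. sets (Fil s) \<subseteq> sets (G s)"
    and G_F: "\<And>s. sets (G s) \<subseteq> sets (Fil (Suc s))"
    and g_meas: "\<And>i s. i < n \<Longrightarrow> g i s \<in> borel_measurable (G s)"
    and D_meas: "\<And>i s. i < n \<Longrightarrow> D i s \<in> borel_measurable (Fil (Suc s))"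
    and g_int: "\<And>i s. i < n \<Longrightarrow> integrable M (\<lambda>w. (norm (g i s w))\<^sup>2)"
    and D_int: "\<And>i s. i < n \<Longrightarrow> integrable M (\<lambda>w. (norm (D i s w))\<^sup>2)"
    (* EC-Approximate *)
    and x_0: "\<And>w. x 0 w = x0"
    and x_Suc: "\<And>s w. x (Suc s) w = x s w - \<gamma> *\<^sub>R hbar - (\<gamma> / real n) *\<^sub>R (\<Sum>i<n. D i s w)"
    and e_0: "\<And>i w. e i 0 w = 0"
    and e_Suc: "\<And>i s w. e i (Suc s) w = e i s w + g i s w - h i - D i s w"
    (* stochastic gradient oracle *)
    and unbiased: "\<And>i s v. i < n \<Longrightarrow>
       AE w in M. real_cond_exp M (Fil s) (\<lambda>w. inner (g i s w) v) w = inner (dfi i (x s w)) v"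
    and variance: "\<And>i s. i < n \<Longrightarrow>
       AE w in M. real_cond_exp M (Fil s) (\<lambda>w. (norm (g i s w - dfi i (x s w)))\<^sup>2) w \<le> \<sigma>\<^sup>2"
    and uncorrelated: "\<And>i j s. i < n \<Longrightarrow> j < n \<Longrightarrow> i \<noteq> j \<Longrightarrow>
       AE w in M. real_cond_exp M (Fil s)
         (\<lambda>w. inner (g i s w - dfi i (x s w)) (g j s w - dfi j (x s w))) w = 0"
    (* contractive compressor with fresh randomness *)
    and compressor: "\<And>i s. i < n \<Longrightarrow>
       AE w in M. real_cond_exp M (G s)
         (\<lambda>w. (norm (D i s w - (e i s w + g i s w - h i)))\<^sup>2) w
         \<le> (1 - \<delta>) * (norm (e i s w + g i s w - h i))\<^sup>2"
  shows
    "let Ft = (\<lambda>s. integral\<^sup>L M (\<lambda>w. f (x s w)) - f xs);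
         Et = (\<lambda>s. (1 / real n) * (\<Sum>i<n. integral\<^sup>L M (\<lambda>w. (norm (e i s w))\<^sup>2)));
         Xt = (\<lambda>s. integral\<^sup>L M (\<lambda>w. (norm (virt_iter n \<gamma> x0 g s w - xs))\<^sup>2));
         a = 12 * L * \<gamma>^3 / \<delta>;
         c = \<gamma> * \<mu> / 2;
         \<Psi> = (\<lambda>s. Xt s + a * Et s)
     in \<Psi> (Suc t) \<le> (1 - c) * \<Psi> t - \<gamma> / 4 * Ft t + \<gamma>\<^sup>2 * \<sigma>\<^sup>2 / real n
          + \<gamma>^3 * (48 * L * \<alpha> / \<delta>\<^sup>2 + 12 * L * \<sigma>\<^sup>2 / \<delta>)"
proof -
  interpret P: prob_space M by (rule M)
  have finM: "finite_measure M" by (rule P.finite_measure_axioms)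
  have nr: "real n \<ge> 1" "real n > 0" using n by auto
  have derI: "\<And>i x. i < n \<Longrightarrow> (fi i has_derivative (\<lambda>v. inner (dfi i x) v)) (at x)"
    using smooth unfolding L_smooth_def by blast
  have lipI: "\<And>i x y. i < n \<Longrightarrow> norm (dfi i x - dfi i y) \<le> L * norm (x - y)"
    using smooth unfolding L_smooth_def by blast
  have contd: "continuous_on UNIV (dfi i)" if "i < n" for i
  proof (rule continuous_onI)
    fix x and \<epsilon> :: real assume "\<epsilon> > 0"
    show "\<exists>d>0. \<forall>x'\<in>UNIV. dist x' x < d \<longrightarrow> dist (dfi i x') (dfi i x) \<le> \<epsilon>"
    proof (intro exI[of _ "\<epsilon> / L"] conjI ballI impI)
      show "\<epsilon> / L > 0" using \<open>\<epsilon> > 0\<close> L by simp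
      fix x' assume "dist x' x < \<epsilon> / L"
      hence "L * dist x' x \<le> \<epsilon>" using L by (simp add: field_simps)
      moreover have "dist (dfi i x') (dfi i x) \<le> L * dist x' x"
        using lipI[OF that, of x' x] by (simp add: dist_norm)
      ultimately show "dist (dfi i x') (dfi i x) \<le> \<epsilon>" by linarith
    qed
  qed
  have contf: "continuous_on UNIV (fi i)" if "i < n" for i
    using derI[OF that] has_derivative_continuous continuous_at_imp_continuous_on by blast
  have fder: "(f has_derivative (\<lambda>v. inner (df y) v)) (at y)" for y
  proof -
    have "((\<lambda>y. (1 / real n) * (\<Sum>i<n. fi i y)) has_derivative (\<lambda>v. (1 / real n) * (\<Sum>i<n. inner (dfi i y) v))) (at y)"
      by (intro has_derivative_mult_right has_derivative_sum derI) auto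
    then show ?thesis unfolding f_def df_def by (simp add: inner_sum_left)
  qed
  have flip: "norm (df y - df z) \<le> L * norm (y - z)" for y z
  proof -
    have "df y - df z = (1 / real n) *\<^sub>R (\<Sum>i<n. dfi i y - dfi i z)"
      unfolding df_def by (simp add: sum_subtractf scaleR_diff_right)
    hence "norm (df y - df z) = (1 / real n) * norm (\<Sum>i<n. dfi i y - dfi i z)" using nr by simp
    also have "\<dots> \<le> (1 / real n) * (\<Sum>i<n. norm (dfi i y - dfi i z))"
      using nr by (intro mult_left_mono norm_sum) auto
    also have "\<dots> \<le> (1 / real n) * (\<Sum>i<n. L * norm (y - z))"
      using nr by (intro mult_left_mono sum_mono lipI) auto
    also have "\<dots> = L * norm (y - z)" using nr by simp
    finally show ?thesis .
  qed
  have dfxs: "df xs = 0"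
  proof -
    define z where "z = xs - (1 / L) *\<^sub>R df xs"
    have "f z \<le> f xs + inner (df xs) (z - xs) + L / 2 * (norm (z - xs))\<^sup>2"
      by (rule descent[OF fder flip])
    also have "\<dots> = f xs - (norm (df xs))\<^sup>2 / (2 * L)"
    proof -
      have zx: "z - xs = (- 1 / L) *\<^sub>R df xs" unfolding z_def by simp
      show ?thesis unfolding zx using L
        by (simp add: dot_square_norm power_mult_distrib power2_eq_square field_simps)
    qed
    finally have "(norm (df xs))\<^sup>2 / (2 * L) \<le> 0" using xs_min[of z] by linarith
    hence "(norm (df xs))\<^sup>2 \<le> 0" using L by (simp add: divide_le_0_iff)
    thus ?thesis by simp
  qed
  have coc_sum: "(1 / real n) * (\<Sum>i<n. (norm (dfi i y - dfi i xs))\<^sup>2) \<le> 2 * L * (f y - f xs)" for y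
  proof -
    have "(\<Sum>i<n. (norm (dfi i y - dfi i xs))\<^sup>2) \<le> (\<Sum>i<n. 2 * L * (fi i y - fi i xs - inner (dfi i xs) (y - xs)))"
      by (intro sum_mono cocoercive smooth conv L) auto
    also have "\<dots> = 2 * L * ((\<Sum>i<n. fi i y) - (\<Sum>i<n. fi i xs) - inner (\<Sum>i<n. dfi i xs) (y - xs))"
      by (simp add: sum_subtractf inner_sum_left flip: sum_distrib_left)
    also have "\<dots> = 2 * L * real n * (f y - f xs - inner (df xs) (y - xs))"
      unfolding f_def df_def using nr by (simp add: field_simps inner_sum_left)
    also have "\<dots> = 2 * L * real n * (f y - f xs)" using dfxs by simp
    finally show ?thesis using nr by (simp add: field_simps)
  qed
  have dfbound: "(norm (df y))\<^sup>2 \<le> 2 * L * (f y - f xs)" for y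
  proof -
    have "df y = (1 / real n) *\<^sub>R (\<Sum>i<n. dfi i y - dfi i xs)"
      using dfxs unfolding df_def by (simp add: sum_subtractf scaleR_diff_right)
    hence "(norm (df y))\<^sup>2 \<le> (1 / real n) * (\<Sum>i<n. (norm (dfi i y - dfi i xs))\<^sup>2)"
      using mean_sq[OF n, of "\<lambda>i. dfi i y - dfi i xs"] by simp
    also have "\<dots> \<le> 2 * L * (f y - f xs)" by (rule coc_sum)
    finally show ?thesis .
  qed
  have fupper: "f y - f xs \<le> L / 2 * (norm (y - xs))\<^sup>2" for y
    using descent[OF fder flip, of y xs] dfxs by simp
  have mu2L: "\<mu> \<le> 2 * L"
  proof -
    obtain b :: 'a where b: "b \<in> Basis" using nonempty_Basis by blast
    have nb: "norm b = 1" using b by simp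
    define y where "y = xs + b"
    have "f xs \<ge> f y + inner (df y) (xs - y) + \<mu> / 2 * (norm (xs - y))\<^sup>2"
      using sqc unfolding strongly_quasi_convex_around_def by blast
    hence "\<mu> / 2 \<le> f xs - f y + inner (df y) b" unfolding y_def using nb by (simp add: inner_minus_right)
    also have "\<dots> \<le> inner (df y) b" using xs_min[of y] by simp
    also have "\<dots> = inner (df y - df xs) b" using dfxs by simp
    also have "\<dots> \<le> norm (df y - df xs) * norm b" by (rule norm_cauchy_schwarz)
    also have "\<dots> \<le> L * norm (y - xs)" using flip[of y xs] nb by simp
    also have "\<dots> = L" unfolding y_def using nb by simp
    finally show ?thesis by simp
  qed
  have spF: "space (Fil s) = space M" for s using sub_F[of s] unfolding subalgebra_def by simp
  have spG: "space (G s) = space M" for s using sub_G[of s] unfolding subalgebra_def by simp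
  have subFF: "subalgebra (Fil (Suc s)) (Fil s)" for s
    unfolding subalgebra_def using F_G[of s] G_F[of s] spF by auto
  have subGF: "subalgebra (Fil (Suc s)) (G s)" for s
    unfolding subalgebra_def using G_F[of s] spF spG by auto
  have subFG: "subalgebra (G s) (Fil s)" for s
    unfolding subalgebra_def using F_G[of s] spF spG by auto
  have mFF: "u \<in> borel_measurable (Fil s) \<Longrightarrow> u \<in> borel_measurable (Fil (Suc s))" for s and u :: "'w \<Rightarrow> 'a"
    by (rule measurable_from_subalg[OF subFF])
  have mGF: "u \<in> borel_measurable (G s) \<Longrightarrow> u \<in> borel_measurable (Fil (Suc s))" for s and u :: "'w \<Rightarrow> 'a"
    by (rule measurable_from_subalg[OF subGF])
  have mFM: "u \<in> borel_measurable (Fil s) \<Longrightarrow> u \<in> borel_measurable M" for s and u :: "'w \<Rightarrow> 'b::topological_space"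
    by (rule measurable_from_subalg[OF sub_F])
  have mFG: "u \<in> borel_measurable (Fil s) \<Longrightarrow> u \<in> borel_measurable (G s)" for s and u :: "'w \<Rightarrow> 'b::topological_space"
    by (rule measurable_from_subalg[OF subFG])
  have mGM: "u \<in> borel_measurable (G s) \<Longrightarrow> u \<in> borel_measurable M" for s and u :: "'w \<Rightarrow> 'b::topological_space"
    by (rule measurable_from_subalg[OF sub_G])
  have gL2: "L2 M (g i s)" if "i < n" for i s
    unfolding L2_def using g_int[OF that] mGM[OF g_meas[OF that]] by simp
  have DL2: "L2 M (D i s)" if "i < n" for i s
    unfolding L2_def using D_int[OF that] mFM[OF D_meas[OF that]] by simp
  have cL2: "L2 M (\<lambda>w. c)" for c :: 'a by (rule L2_const[OF finM])
  have x_Suc': "x (Suc s) = (\<lambda>w. x s w - \<gamma> *\<^sub>R hbar - (\<gamma> / real n) *\<^sub>R (\<Sum>i<n. D i s w))" for s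
    using x_Suc by (intro ext) simp
  have e_Suc': "e i (Suc s) = (\<lambda>w. e i s w + g i s w - h i - D i s w)" for i s
    using e_Suc by (intro ext) simp
  have v_Suc': "virt_iter n \<gamma> x0 g (Suc s) = (\<lambda>w. virt_iter n \<gamma> x0 g s w - (\<gamma> / real n) *\<^sub>R (\<Sum>i<n. g i s w))" for s
    by (intro ext) simp
  have xmeas: "x s \<in> borel_measurable (Fil s)" for s
  proof (induction s)
    case 0 then show ?case unfolding x_0 by simp
  next
    case (Suc s)
    have D: "(\<lambda>w. D i s w) \<in> borel_measurable (Fil (Suc s))" if "i \<in> {..<n}" for i using D_meas that by simp
    have "(\<lambda>w. x s w - \<gamma> *\<^sub>R hbar - (\<gamma> / real n) *\<^sub>R (\<Sum>i<n. D i s w)) \<in> borel_measurable (Fil (Suc s))"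
      using mFF[OF Suc] D by measurable
    then show ?case unfolding x_Suc' .
  qed
  have emeas: "e i s \<in> borel_measurable (Fil s)" if "i < n" for i s
  proof (induction s)
    case 0 then show ?case unfolding e_0 by simp
  next
    case (Suc s)
    have "(\<lambda>w. e i s w + g i s w - h i - D i s w) \<in> borel_measurable (Fil (Suc s))"
      using mFF[OF Suc] mGF[OF g_meas[OF that]] D_meas[OF that] by measurable
    then show ?case unfolding e_Suc' .
  qed
  have vmeas: "virt_iter n \<gamma> x0 g s \<in> borel_measurable (Fil s)" for s
  proof (induction s)
    case 0 then show ?case by simp
  next
    case (Suc s)
    have G: "(\<lambda>w. g i s w) \<in> borel_measurable (Fil (Suc s))" if "i \<in> {..<n}" for i using mGF[OF g_meas] that by simp
    have "(\<lambda>w. virt_iter n \<gamma> x0 g s w - (\<gamma> / real n) *\<^sub>R (\<Sum>i<n. g i s w)) \<in> borel_measurable (Fil (Suc s))"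
      using mFF[OF Suc] G by measurable
    then show ?case unfolding v_Suc' .
  qed
  have xL2: "L2 M (x s)" for s
  proof (induction s)
    case 0 then show ?case unfolding x_0 by (rule cL2)
  next
    case (Suc s)
    show ?case unfolding x_Suc'
      by (intro L2_diff L2_scale L2_sum[OF finM] Suc cL2 DL2) auto
  qed
  have eL2: "L2 M (e i s)" if "i < n" for i s
  proof (induction s)
    case 0 then show ?case unfolding e_0 by (rule cL2)
  next
    case (Suc s)
    show ?case unfolding e_Suc'
      by (intro L2_diff L2_add Suc cL2 DL2 gL2 that)
  qed
  have vL2: "L2 M (virt_iter n \<gamma> x0 g s)" for s
  proof (induction s)
    case 0 then show ?case by (simp add: cL2)
  next
    case (Suc s)
    show ?case unfolding v_Suc'
      by (intro L2_diff L2_scale L2_sum[OF finM] Suc gL2) auto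
  qed
  have dfimeas: "(\<lambda>w. dfi i (x s w)) \<in> borel_measurable (Fil s)" if "i < n" for i s
    using borel_measurable_continuous_on[OF contd[OF that] xmeas] .
  have dfiL2: "L2 M (\<lambda>w. dfi i (x s w))" if "i < n" for i s
  proof (rule L2_bound2[OF finM L2_diff[OF xL2 cL2, of s xs] mFM[OF dfimeas[OF that]]])
    fix w
    have "norm (dfi i (x s w)) \<le> norm (dfi i xs) + norm (dfi i (x s w) - dfi i xs)"
      by (rule norm_triangle_sub)
    also have "\<dots> \<le> norm (dfi i xs) + L * norm (x s w - xs)"
      using lipI[OF that] by simp
    finally show "norm (dfi i (x s w)) \<le> norm (dfi i xs) + L * norm (x s w - xs)" .
  qed
  have VX: "virt_iter n \<gamma> x0 g s w = x s w - \<gamma> *\<^sub>R ((1 / real n) *\<^sub>R (\<Sum>i<n. e i s w))" for s w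
  proof (induction s)
    case 0 then show ?case by (simp add: x_0 e_0)
  next
    case (Suc s)
    have "virt_iter n \<gamma> x0 g (Suc s) w = x s w - \<gamma> *\<^sub>R ((1 / real n) *\<^sub>R (\<Sum>i<n. e i s w)) - (\<gamma> / real n) *\<^sub>R (\<Sum>i<n. g i s w)"
      using Suc by simp
    also have "\<dots> = x (Suc s) w - \<gamma> *\<^sub>R ((1 / real n) *\<^sub>R (\<Sum>i<n. e i (Suc s) w))"
      unfolding x_Suc e_Suc hbar_def using nr
      by (simp add: sum.distrib sum_subtractf scaleR_diff_right scaleR_add_right algebra_simps)
    finally show ?case .
  qed
  define X where "X = x t"
  define V where "V = virt_iter n \<gamma> x0 g t"
  define V1 where "V1 = virt_iter n \<gamma> x0 g (Suc t)"
  define \<xi> where "\<xi> = (\<lambda>i w. g i t w - dfi i (X w))"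
  define xb where "xb = (\<lambda>w. (1 / real n) *\<^sub>R (\<Sum>i<n. \<xi> i w))"
  define eb where "eb = (\<lambda>w. (1 / real n) *\<^sub>R (\<Sum>i<n. e i t w))"
  define Eb where "Eb = (\<lambda>w. (1 / real n) * (\<Sum>i<n. (norm (e i t w))\<^sup>2))"
  define \<Phi> where "\<Phi> = (\<lambda>w. f (X w) - f xs)"
  define dF where "dF = (\<lambda>w. df (X w))"
  define U where "U = (\<lambda>w. V w - xs - \<gamma> *\<^sub>R dF w)"
  have XL2: "L2 M X" unfolding X_def by (rule xL2)
  have VL2: "L2 M V" unfolding V_def by (rule vL2)
  have V1L2: "L2 M V1" unfolding V1_def by (rule vL2)
  have \<xi>L2: "L2 M (\<xi> i)" if "i < n" for i
    unfolding \<xi>_def X_def by (intro L2_diff gL2 dfiL2 that)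
  have xbL2: "L2 M xb" unfolding xb_def by (intro L2_scale L2_sum[OF finM] \<xi>L2) auto
  have dF_eq: "dF = (\<lambda>w. (1 / real n) *\<^sub>R (\<Sum>i<n. dfi i (X w)))" unfolding dF_def df_def ..
  have dFL2: "L2 M dF" unfolding dF_eq X_def by (intro L2_scale L2_sum[OF finM] dfiL2) auto
  have dFmeas: "dF \<in> borel_measurable (Fil t)"
  proof -
    have "(\<lambda>w. (1 / real n) *\<^sub>R (\<Sum>i<n. dfi i (x t w))) \<in> borel_measurable (Fil t)"
      by (intro borel_measurable_scaleR borel_measurable_const borel_measurable_sum dfimeas) auto
    then show ?thesis unfolding dF_eq X_def .
  qed
  have UL2: "L2 M U" unfolding U_def by (intro L2_diff L2_scale VL2 dFL2 cL2)
  have Umeas: "U \<in> borel_measurable (Fil t)"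
    unfolding U_def V_def using vmeas[of t] dFmeas by measurable
  have fXmeas: "(\<lambda>w. f (X w)) \<in> borel_measurable M"
  proof -
    have "(\<lambda>w. (1 / real n) * (\<Sum>i<n. fi i (X w))) \<in> borel_measurable M"
      by (intro borel_measurable_times borel_measurable_const borel_measurable_sum
          borel_measurable_continuous_on[OF contf] L2_meas[OF XL2]) auto
    then show ?thesis unfolding f_def .
  qed
  have \<Phi>nn: "\<Phi> w \<ge> 0" for w unfolding \<Phi>_def using xs_min[of "X w"] by simp
  have \<Phi>int: "integrable M \<Phi>"
  proof (rule Bochner_Integration.integrable_bound[where f="\<lambda>w. L / 2 * (norm (X w - xs))\<^sup>2"])
    show "integrable M (\<lambda>w. L / 2 * (norm (X w - xs))\<^sup>2)"
      using L2_norm2[OF L2_diff[OF XL2 cL2]] by simp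
    show "\<Phi> \<in> borel_measurable M" unfolding \<Phi>_def using fXmeas by measurable
    show "AE w in M. norm (\<Phi> w) \<le> norm (L / 2 * (norm (X w - xs))\<^sup>2)"
      using fupper \<Phi>nn L unfolding \<Phi>_def by (auto intro!: AE_I2)
  qed
  have eint: "integrable M (\<lambda>w. (norm (e i s w))\<^sup>2)" if "i < n" for i s
    using L2_norm2[OF eL2[OF that]] .
  have Ebint: "integrable M Eb" unfolding Eb_def
    by (intro integrable_mult_right Bochner_Integration.integrable_sum eint) auto
  have intEb: "integral\<^sup>L M Eb = (1 / real n) * (\<Sum>i<n. integral\<^sup>L M (\<lambda>w. (norm (e i t w))\<^sup>2))"
    unfolding Eb_def using eint by (simp add: Bochner_Integration.integral_sum)
  have intconst: "integral\<^sup>L M (\<lambda>w. c) = c" for c :: real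
    by (simp add: P.prob_space)
  have int\<Phi>: "integral\<^sup>L M \<Phi> = integral\<^sup>L M (\<lambda>w. f (x t w)) - f xs"
  proof -
    have "integrable M (\<lambda>w. f (X w))"
    proof -
      have "integrable M (\<lambda>w. \<Phi> w + f xs)" using \<Phi>int by simp
      then show ?thesis unfolding \<Phi>_def by simp
    qed
    then show ?thesis unfolding \<Phi>_def X_def by (simp add: intconst P.prob_space)
  qed
  have V1eq: "V1 w = V w - \<gamma> *\<^sub>R (dF w + xb w)" for w
  proof -
    have "(\<Sum>i<n. g i t w) = (\<Sum>i<n. \<xi> i w) + (\<Sum>i<n. dfi i (X w))"
      unfolding \<xi>_def by (simp add: sum.distrib[symmetric])
    hence "(\<gamma> / real n) *\<^sub>R (\<Sum>i<n. g i t w) = \<gamma> *\<^sub>R (dF w + xb w)"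
      unfolding dF_eq xb_def by (simp add: scaleR_add_right)
    then show ?thesis unfolding V1_def V_def by simp
  qed
  have PX: "(norm (V1 w - xs))\<^sup>2 \<le> (1 - \<gamma> * \<mu> / 2) * (norm (V w - xs))\<^sup>2 - \<gamma> * (1 - 2 * L * \<gamma>) * \<Phi> w
      + 4 * L * \<gamma>^3 * Eb w + \<gamma>\<^sup>2 * (norm (xb w))\<^sup>2 - 2 * \<gamma> * inner (U w) (xb w)" for w
  proof -
    have id: "(norm (V1 w - xs))\<^sup>2 = ((norm (V w - xs))\<^sup>2 - 2 * \<gamma> * inner (V w - xs) (dF w) + \<gamma>\<^sup>2 * (norm (dF w))\<^sup>2)
       + \<gamma>\<^sup>2 * (norm (xb w))\<^sup>2 - 2 * \<gamma> * inner (U w) (xb w)"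
      unfolding V1eq U_def
      by (simp only: power2_norm_eq_inner)
        (simp add: inner_diff_left inner_diff_right inner_add_left inner_add_right
          inner_commute power2_eq_square algebra_simps)
    have Vw: "V w = X w + \<gamma> *\<^sub>R (- eb w)" unfolding V_def X_def eb_def using VX by simp
    have sq: "inner (dF w) (X w - xs) \<ge> \<Phi> w + \<mu> / 2 * (norm (X w - xs))\<^sup>2"
    proof -
      have "f xs \<ge> f (X w) + inner (df (X w)) (xs - X w) + \<mu> / 2 * (norm (xs - X w))\<^sup>2"
        using sqc unfolding strongly_quasi_convex_around_def by blast
      moreover have "inner (df (X w)) (xs - X w) = - inner (df (X w)) (X w - xs)"
        by (simp add: inner_diff_right)
      moreover have "norm (xs - X w) = norm (X w - xs)" by (rule norm_minus_commute)
      ultimately show ?thesis unfolding \<Phi>_def dF_def by simp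
    qed
    have A: "(norm (V w - xs))\<^sup>2 - 2 * \<gamma> * inner (V w - xs) (dF w) + \<gamma>\<^sup>2 * (norm (dF w))\<^sup>2
      \<le> (1 - \<gamma> * \<mu> / 2) * (norm (V w - xs))\<^sup>2 - \<gamma> * (1 - 2 * L * \<gamma>) * \<Phi> w + 4 * L * \<gamma>^3 * (norm (- eb w))\<^sup>2"
      by (rule xbound[OF Vw sq]) (use dfbound[of "X w"] \<Phi>nn mu2L gamma L mu in \<open>auto simp: \<Phi>_def dF_def\<close>)
    have "(norm (eb w))\<^sup>2 \<le> Eb w" unfolding eb_def Eb_def by (rule mean_sq[OF n])
    hence "4 * L * \<gamma>^3 * (norm (- eb w))\<^sup>2 \<le> 4 * L * \<gamma>^3 * Eb w"
      using L gamma by (intro mult_left_mono) auto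
    then show ?thesis unfolding id using A by linarith
  qed
  have Uxb0: "integral\<^sup>L M (\<lambda>w. inner (U w) (xb w)) = 0"
  proof -
    have each: "integral\<^sup>L M (\<lambda>w. inner (\<xi> i w) (U w)) = 0" if "i < n" for i
      unfolding \<xi>_def X_def
      by (rule CE_unbiased[OF M sub_F gL2[OF that] dfiL2[OF that] UL2 Umeas unbiased[OF that]])
    have "integral\<^sup>L M (\<lambda>w. inner (U w) (xb w)) = integral\<^sup>L M (\<lambda>w. (1 / real n) * (\<Sum>i<n. inner (\<xi> i w) (U w)))"
      unfolding xb_def by (simp add: inner_sum_right inner_commute)
    also have "\<dots> = (1 / real n) * (\<Sum>i<n. integral\<^sup>L M (\<lambda>w. inner (\<xi> i w) (U w)))"
      using L2_inner[OF \<xi>L2 UL2] by (simp add: Bochner_Integration.integral_sum)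
    also have "\<dots> = 0" using each by simp
    finally show ?thesis .
  qed
  have \<xi>var: "integral\<^sup>L M (\<lambda>w. (norm (\<xi> i w))\<^sup>2) \<le> \<sigma>\<^sup>2" if "i < n" for i
  proof -
    have "integral\<^sup>L M (\<lambda>w. (norm (\<xi> i w))\<^sup>2) \<le> integral\<^sup>L M (\<lambda>w. \<sigma>\<^sup>2)"
      by (rule CE_le[OF M sub_F L2_norm2[OF \<xi>L2[OF that]]])
        (use variance[OF that, of t] in \<open>auto simp: \<xi>_def X_def\<close>)
    then show ?thesis by (simp add: intconst P.prob_space)
  qed
  have \<xi>cov: "integral\<^sup>L M (\<lambda>w. inner (\<xi> i w) (\<xi> j w)) = 0" if "i < n" "j < n" "i \<noteq> j" for i j
    by (rule CE_eq0[OF M sub_F L2_inner[OF \<xi>L2[OF that(1)] \<xi>L2[OF that(2)]]])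
      (use uncorrelated[OF that, of t] in \<open>auto simp: \<xi>_def X_def\<close>)
  have xbvar: "integral\<^sup>L M (\<lambda>w. (norm (xb w))\<^sup>2) \<le> \<sigma>\<^sup>2 / real n"
  proof -
    have "(norm (xb w))\<^sup>2 = (1 / real n)\<^sup>2 * (\<Sum>i<n. \<Sum>j<n. inner (\<xi> i w) (\<xi> j w))" for w
    proof -
      have "inner (\<Sum>i<n. \<xi> i w) (\<Sum>j<n. \<xi> j w) = (\<Sum>i<n. \<Sum>j<n. inner (\<xi> i w) (\<xi> j w))"
        by (simp add: inner_sum_left inner_sum_right) (rule sum.swap)
      moreover have "(norm (xb w))\<^sup>2 = (1 / real n)\<^sup>2 * inner (\<Sum>i<n. \<xi> i w) (\<Sum>j<n. \<xi> j w)"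
        unfolding xb_def by (simp add: power_divide dot_square_norm)
      ultimately show ?thesis by simp
    qed
    hence e1: "integral\<^sup>L M (\<lambda>w. (norm (xb w))\<^sup>2) = (1 / real n)\<^sup>2 * integral\<^sup>L M (\<lambda>w. \<Sum>i<n. \<Sum>j<n. inner (\<xi> i w) (\<xi> j w))"
      by simp
    have ii: "integrable M (\<lambda>w. inner (\<xi> i w) (\<xi> j w))" if "i < n" "j < n" for i j
      using L2_inner[OF \<xi>L2[OF that(1)] \<xi>L2[OF that(2)]] .
    have "integral\<^sup>L M (\<lambda>w. \<Sum>i<n. \<Sum>j<n. inner (\<xi> i w) (\<xi> j w))
        = (\<Sum>i<n. integral\<^sup>L M (\<lambda>w. \<Sum>j<n. inner (\<xi> i w) (\<xi> j w)))"
      by (rule Bochner_Integration.integral_sum) (use ii in \<open>auto intro!: Bochner_Integration.integrable_sum\<close>)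
    also have "\<dots> = (\<Sum>i<n. \<Sum>j<n. integral\<^sup>L M (\<lambda>w. inner (\<xi> i w) (\<xi> j w)))"
      by (intro sum.cong refl Bochner_Integration.integral_sum) (use ii in auto)
    finally have "integral\<^sup>L M (\<lambda>w. (norm (xb w))\<^sup>2) = (1 / real n)\<^sup>2 * (\<Sum>i<n. \<Sum>j<n. integral\<^sup>L M (\<lambda>w. inner (\<xi> i w) (\<xi> j w)))"
      using e1 by simp
    also have "\<dots> \<le> (1 / real n)\<^sup>2 * (\<Sum>i<n. \<sigma>\<^sup>2)"
    proof (intro mult_left_mono sum_mono)
      fix i assume i: "i \<in> {..<n}"
      have "(\<Sum>j<n. integral\<^sup>L M (\<lambda>w. inner (\<xi> i w) (\<xi> j w))) = integral\<^sup>L M (\<lambda>w. inner (\<xi> i w) (\<xi> i w))"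
      proof -
        have "(\<Sum>j\<in>{..<n}-{i}. integral\<^sup>L M (\<lambda>w. inner (\<xi> i w) (\<xi> j w))) = 0"
          by (rule sum.neutral) (use \<xi>cov i in auto)
        then show ?thesis by (simp add: sum.remove[OF finite_lessThan i])
      qed
      also have "\<dots> \<le> \<sigma>\<^sup>2" using \<xi>var[of i] i by (simp add: power2_norm_eq_inner)
      finally show "(\<Sum>j<n. integral\<^sup>L M (\<lambda>w. inner (\<xi> i w) (\<xi> j w))) \<le> \<sigma>\<^sup>2" .
    qed simp
    also have "\<dots> = \<sigma>\<^sup>2 / real n" using nr by (simp add: power2_eq_square)
    finally show ?thesis .
  qed
  have VxsI: "integrable M (\<lambda>w. (norm (V w - xs))\<^sup>2)" using L2_norm2[OF L2_diff[OF VL2 cL2]] .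
  have V1xsI: "integrable M (\<lambda>w. (norm (V1 w - xs))\<^sup>2)" using L2_norm2[OF L2_diff[OF V1L2 cL2]] .
  have xbI: "integrable M (\<lambda>w. (norm (xb w))\<^sup>2)" using L2_norm2[OF xbL2] .
  have UxbI: "integrable M (\<lambda>w. inner (U w) (xb w))" using L2_inner[OF UL2 xbL2] .
  have IX: "integral\<^sup>L M (\<lambda>w. (norm (V1 w - xs))\<^sup>2) \<le> (1 - \<gamma> * \<mu> / 2) * integral\<^sup>L M (\<lambda>w. (norm (V w - xs))\<^sup>2)
     - \<gamma> * (1 - 2 * L * \<gamma>) * integral\<^sup>L M \<Phi> + 4 * L * \<gamma>^3 * integral\<^sup>L M Eb + \<gamma>\<^sup>2 * (\<sigma>\<^sup>2 / real n)"
  proof -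
    let ?R = "\<lambda>w. (1 - \<gamma> * \<mu> / 2) * (norm (V w - xs))\<^sup>2 - \<gamma> * (1 - 2 * L * \<gamma>) * \<Phi> w
      + 4 * L * \<gamma>^3 * Eb w + \<gamma>\<^sup>2 * (norm (xb w))\<^sup>2 - 2 * \<gamma> * inner (U w) (xb w)"
    have RI: "integrable M ?R" using VxsI \<Phi>int Ebint xbI UxbI by auto
    have "integral\<^sup>L M (\<lambda>w. (norm (V1 w - xs))\<^sup>2) \<le> integral\<^sup>L M ?R"
      by (rule integral_mono[OF V1xsI RI PX])
    also have "integral\<^sup>L M ?R = (1 - \<gamma> * \<mu> / 2) * integral\<^sup>L M (\<lambda>w. (norm (V w - xs))\<^sup>2)
     - \<gamma> * (1 - 2 * L * \<gamma>) * integral\<^sup>L M \<Phi> + 4 * L * \<gamma>^3 * integral\<^sup>L M Eb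
     + \<gamma>\<^sup>2 * integral\<^sup>L M (\<lambda>w. (norm (xb w))\<^sup>2) - 2 * \<gamma> * integral\<^sup>L M (\<lambda>w. inner (U w) (xb w))"
      using VxsI \<Phi>int Ebint xbI UxbI by simp
    also have "\<dots> \<le> (1 - \<gamma> * \<mu> / 2) * integral\<^sup>L M (\<lambda>w. (norm (V w - xs))\<^sup>2)
     - \<gamma> * (1 - 2 * L * \<gamma>) * integral\<^sup>L M \<Phi> + 4 * L * \<gamma>^3 * integral\<^sup>L M Eb + \<gamma>\<^sup>2 * (\<sigma>\<^sup>2 / real n)"
    proof -
      have "\<gamma>\<^sup>2 * integral\<^sup>L M (\<lambda>w. (norm (xb w))\<^sup>2) \<le> \<gamma>\<^sup>2 * (\<sigma>\<^sup>2 / real n)"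
        using xbvar by (intro mult_left_mono) auto
      then show ?thesis using Uxb0 by simp
    qed
    finally show ?thesis .
  qed
  define k where "k = (\<lambda>i w. dfi i (X w) - h i)"
  have kL2: "L2 M (k i)" if "i < n" for i unfolding k_def X_def by (intro L2_diff dfiL2 cL2 that)
  have IE: "integral\<^sup>L M (\<lambda>w. (norm (e i (Suc t) w))\<^sup>2) \<le> (1 - \<delta> / 2) * integral\<^sup>L M (\<lambda>w. (norm (e i t w))\<^sup>2)
      + (2 / \<delta>) * integral\<^sup>L M (\<lambda>w. (norm (k i w))\<^sup>2) + \<sigma>\<^sup>2" if i: "i < n" for i
  proof -
    define q where "q = (\<lambda>w. e i t w + g i t w - h i)"
    have qL2: "L2 M q" unfolding q_def by (intro L2_diff L2_add eL2 gL2 cL2 i)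
    have Dq: "L2 M (\<lambda>w. D i t w - q w)" by (intro L2_diff DL2 qL2 i)
    have en: "(norm (e i (Suc t) w))\<^sup>2 = (norm (D i t w - q w))\<^sup>2" for w
      unfolding e_Suc q_def by (simp add: norm_minus_commute)
    have s1: "integral\<^sup>L M (\<lambda>w. (norm (e i (Suc t) w))\<^sup>2) \<le> integral\<^sup>L M (\<lambda>w. (1 - \<delta>) * (norm (q w))\<^sup>2)"
      unfolding en
      by (rule CE_le[OF M sub_G L2_norm2[OF Dq]]) (use L2_norm2[OF qL2] compressor[OF i, of t] in \<open>auto simp: q_def\<close>)
    define u where "u = (\<lambda>w. e i t w + k i w)"
    have uL2: "L2 M u" unfolding u_def by (intro L2_add eL2 kL2 i)
    have umeas: "u \<in> borel_measurable (Fil t)"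
      unfolding u_def k_def X_def using emeas[OF i, of t] dfimeas[OF i, of t] by measurable
    have pw: "(1 - \<delta>) * (norm (q w))\<^sup>2 \<le> (1 - \<delta> / 2) * (norm (e i t w))\<^sup>2 + (2 / \<delta>) * (norm (k i w))\<^sup>2
        + 2 * (1 - \<delta>) * inner (u w) (\<xi> i w) + (norm (\<xi> i w))\<^sup>2" for w
    proof -
      have "q w = e i t w + k i w + \<xi> i w" unfolding q_def k_def \<xi>_def by simp
      then show ?thesis unfolding u_def using ebound[OF delta, of "e i t w" "k i w" "\<xi> i w"] by simp
    qed
    have u0: "integral\<^sup>L M (\<lambda>w. inner (u w) (\<xi> i w)) = 0"
    proof -
      have "integral\<^sup>L M (\<lambda>w. inner (\<xi> i w) (u w)) = 0"
        unfolding \<xi>_def X_def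
        by (rule CE_unbiased[OF M sub_F gL2[OF i] dfiL2[OF i] uL2 umeas unbiased[OF i]])
      then show ?thesis by (simp add: inner_commute)
    qed
    have I1: "integrable M (\<lambda>w. (norm (e i t w))\<^sup>2)" using eint[OF i] .
    have I2: "integrable M (\<lambda>w. (norm (k i w))\<^sup>2)" using L2_norm2[OF kL2[OF i]] .
    have I3: "integrable M (\<lambda>w. inner (u w) (\<xi> i w))" using L2_inner[OF uL2 \<xi>L2[OF i]] .
    have I4: "integrable M (\<lambda>w. (norm (\<xi> i w))\<^sup>2)" using L2_norm2[OF \<xi>L2[OF i]] .
    have "integral\<^sup>L M (\<lambda>w. (1 - \<delta>) * (norm (q w))\<^sup>2) \<le> integral\<^sup>L M (\<lambda>w. (1 - \<delta> / 2) * (norm (e i t w))\<^sup>2 + (2 / \<delta>) * (norm (k i w))\<^sup>2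
        + 2 * (1 - \<delta>) * inner (u w) (\<xi> i w) + (norm (\<xi> i w))\<^sup>2)"
      by (rule integral_mono[OF _ _ pw]) (use L2_norm2[OF qL2] I1 I2 I3 I4 in auto)
    also have "\<dots> = (1 - \<delta> / 2) * integral\<^sup>L M (\<lambda>w. (norm (e i t w))\<^sup>2) + (2 / \<delta>) * integral\<^sup>L M (\<lambda>w. (norm (k i w))\<^sup>2)
        + 2 * (1 - \<delta>) * integral\<^sup>L M (\<lambda>w. inner (u w) (\<xi> i w)) + integral\<^sup>L M (\<lambda>w. (norm (\<xi> i w))\<^sup>2)"
      using I1 I2 I3 I4 by simp
    also have "\<dots> \<le> (1 - \<delta> / 2) * integral\<^sup>L M (\<lambda>w. (norm (e i t w))\<^sup>2) + (2 / \<delta>) * integral\<^sup>L M (\<lambda>w. (norm (k i w))\<^sup>2) + \<sigma>\<^sup>2"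
      using u0 \<xi>var[OF i] by simp
    finally show ?thesis using s1 by linarith
  qed
  have kbound: "(1 / real n) * (\<Sum>i<n. integral\<^sup>L M (\<lambda>w. (norm (k i w))\<^sup>2)) \<le> 4 * L * integral\<^sup>L M \<Phi> + 2 * \<alpha>"
  proof -
    define A where "A = (1 / real n) * (\<Sum>i<n. (norm (h i - dfi i xs))\<^sup>2)"
    have kI: "integrable M (\<lambda>w. (norm (k i w))\<^sup>2)" if "i < n" for i using L2_norm2[OF kL2[OF that]] .
    have pw: "(1 / real n) * (\<Sum>i<n. (norm (k i w))\<^sup>2) \<le> 4 * L * \<Phi> w + 2 * A" for w
    proof -
      have "(norm (k i w))\<^sup>2 \<le> 2 * (norm (dfi i (X w) - dfi i xs))\<^sup>2 + 2 * (norm (h i - dfi i xs))\<^sup>2" for i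
      proof -
        have "k i w = (dfi i (X w) - dfi i xs) + (dfi i xs - h i)" unfolding k_def by simp
        hence "(norm (k i w))\<^sup>2 \<le> (1 + 1) * (norm (dfi i (X w) - dfi i xs))\<^sup>2 + (1 + 1 / 1) * (norm (dfi i xs - h i))\<^sup>2"
          using young[of 1 "dfi i (X w) - dfi i xs" "dfi i xs - h i"] by simp
        then show ?thesis by (simp add: norm_minus_commute)
      qed
      hence "(\<Sum>i<n. (norm (k i w))\<^sup>2) \<le> (\<Sum>i<n. 2 * (norm (dfi i (X w) - dfi i xs))\<^sup>2 + 2 * (norm (h i - dfi i xs))\<^sup>2)"
        by (intro sum_mono)
      also have "\<dots> = 2 * (\<Sum>i<n. (norm (dfi i (X w) - dfi i xs))\<^sup>2) + 2 * (\<Sum>i<n. (norm (h i - dfi i xs))\<^sup>2)"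
        by (simp add: sum.distrib sum_distrib_left)
      finally have "(1 / real n) * (\<Sum>i<n. (norm (k i w))\<^sup>2) \<le> (1 / real n) * (2 * (\<Sum>i<n. (norm (dfi i (X w) - dfi i xs))\<^sup>2) + 2 * (\<Sum>i<n. (norm (h i - dfi i xs))\<^sup>2))"
        using nr by (intro mult_left_mono) auto
      also have "\<dots> = 2 * ((1 / real n) * (\<Sum>i<n. (norm (dfi i (X w) - dfi i xs))\<^sup>2)) + 2 * A"
        unfolding A_def by (simp add: algebra_simps)
      also have "\<dots> \<le> 2 * (2 * L * \<Phi> w) + 2 * A"
        using coc_sum[of "X w"] unfolding \<Phi>_def by simp
      finally show ?thesis by simp
    qed
    have "(1 / real n) * (\<Sum>i<n. integral\<^sup>L M (\<lambda>w. (norm (k i w))\<^sup>2)) = integral\<^sup>L M (\<lambda>w. (1 / real n) * (\<Sum>i<n. (norm (k i w))\<^sup>2))"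
      using kI by (simp add: Bochner_Integration.integral_sum)
    also have "\<dots> \<le> integral\<^sup>L M (\<lambda>w. 4 * L * \<Phi> w + 2 * A)"
      by (rule integral_mono[OF _ _ pw]) (use kI \<Phi>int in \<open>auto intro!: integrable_mult_right Bochner_Integration.integrable_sum\<close>)
    also have "\<dots> = 4 * L * integral\<^sup>L M \<Phi> + 2 * A" using \<Phi>int by (simp add: intconst P.prob_space)
    also have "\<dots> \<le> 4 * L * integral\<^sup>L M \<Phi> + 2 * \<alpha>" using h_alpha unfolding A_def by simp
    finally show ?thesis .
  qed
  define E0 where "E0 = (1 / real n) * (\<Sum>i<n. integral\<^sup>L M (\<lambda>w. (norm (e i t w))\<^sup>2))"
  define E1 where "E1 = (1 / real n) * (\<Sum>i<n. integral\<^sup>L M (\<lambda>w. (norm (e i (Suc t) w))\<^sup>2))"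
  define F0 where "F0 = integral\<^sup>L M (\<lambda>w. f (x t w)) - f xs"
  define K where "K = (1 / real n) * (\<Sum>i<n. integral\<^sup>L M (\<lambda>w. (norm (k i w))\<^sup>2))"
  have hE: "E1 \<le> (1 - \<delta> / 2) * E0 + (2 / \<delta>) * (4 * L * F0 + 2 * \<alpha>) + \<sigma>\<^sup>2"
  proof -
    have "(\<Sum>i<n. integral\<^sup>L M (\<lambda>w. (norm (e i (Suc t) w))\<^sup>2))
        \<le> (\<Sum>i<n. (1 - \<delta> / 2) * integral\<^sup>L M (\<lambda>w. (norm (e i t w))\<^sup>2)
      + (2 / \<delta>) * integral\<^sup>L M (\<lambda>w. (norm (k i w))\<^sup>2) + \<sigma>\<^sup>2)"
      by (intro sum_mono IE) auto
    also have "\<dots> = (1 - \<delta> / 2) * (\<Sum>i<n. integral\<^sup>L M (\<lambda>w. (norm (e i t w))\<^sup>2))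
      + (2 / \<delta>) * (\<Sum>i<n. integral\<^sup>L M (\<lambda>w. (norm (k i w))\<^sup>2)) + real n * \<sigma>\<^sup>2"
      by (simp add: sum.distrib sum_distrib_left)
    finally have "E1 \<le> (1 / real n) * ((1 - \<delta> / 2) * (\<Sum>i<n. integral\<^sup>L M (\<lambda>w. (norm (e i t w))\<^sup>2))
      + (2 / \<delta>) * (\<Sum>i<n. integral\<^sup>L M (\<lambda>w. (norm (k i w))\<^sup>2)) + real n * \<sigma>\<^sup>2)"
      unfolding E1_def using nr by (intro mult_left_mono) auto
    also have "\<dots> = (1 - \<delta> / 2) * E0 + (2 / \<delta>) * K + \<sigma>\<^sup>2"
      unfolding E0_def K_def using nr by (simp add: field_simps)
    also have "\<dots> \<le> (1 - \<delta> / 2) * E0 + (2 / \<delta>) * (4 * L * F0 + 2 * \<alpha>) + \<sigma>\<^sup>2"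
      using kbound delta unfolding K_def F0_def int\<Phi>[symmetric] by (intro add_mono mult_left_mono) auto
    finally show ?thesis .
  qed
  have hX: "integral\<^sup>L M (\<lambda>w. (norm (V1 w - xs))\<^sup>2) \<le> (1 - \<gamma> * \<mu> / 2) * integral\<^sup>L M (\<lambda>w. (norm (V w - xs))\<^sup>2)
     - \<gamma> * (1 - 2 * L * \<gamma>) * F0 + 4 * L * \<gamma>^3 * E0 + \<gamma>\<^sup>2 * \<sigma>\<^sup>2 / real n"
    using IX unfolding F0_def E0_def int\<Phi>[symmetric] intEb[symmetric] by simp
  have s6: "2 \<le> sqrt 6" by (simp add: real_le_rsqrt)
  have gL: "\<gamma> * (8 * sqrt 6 * L) \<le> \<delta>" using gamma L by (simp add: pos_le_divide_eq)
  have g1: "16 * L * \<gamma> \<le> \<delta>"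
  proof -
    have "16 * L * \<gamma> \<le> \<gamma> * (8 * sqrt 6 * L)" using s6 gamma L by (simp add: mult_left_mono)
    then show ?thesis using gL by linarith
  qed
  have g2: "384 * (L * \<gamma>)\<^sup>2 \<le> \<delta>\<^sup>2"
  proof -
    have "(\<gamma> * (8 * sqrt 6 * L))\<^sup>2 \<le> \<delta>\<^sup>2" using gL gamma L by (intro power_mono) auto
    moreover have "(\<gamma> * (8 * sqrt 6 * L))\<^sup>2 = 384 * (L * \<gamma>)\<^sup>2" by (simp add: power_mult_distrib algebra_simps)
    ultimately show ?thesis by simp
  qed
  have E0nn: "E0 \<ge> 0" unfolding E0_def using nr by (intro mult_nonneg_nonneg sum_nonneg) auto
  have F0nn: "F0 \<ge> 0" unfolding F0_def int\<Phi>[symmetric] using \<Phi>nn by (simp add: Bochner_Integration.integral_nonneg)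
  have fin: "integral\<^sup>L M (\<lambda>w. (norm (V1 w - xs))\<^sup>2) + 12 * L * \<gamma>^3 / \<delta> * E1
      \<le> (1 - \<gamma> * \<mu> / 2) * (integral\<^sup>L M (\<lambda>w. (norm (V w - xs))\<^sup>2) + 12 * L * \<gamma>^3 / \<delta> * E0) - \<gamma> / 4 * F0
      + \<gamma>\<^sup>2 * \<sigma>\<^sup>2 / real n + \<gamma>^3 * (48 * L * \<alpha> / \<delta>\<^sup>2 + 12 * L * \<sigma>\<^sup>2 / \<delta>)"
    by (rule final_arith[OF L mu delta gamma(1) nr(2) mu2L g1 g2 E0nn F0nn _ hX hE]) simp
  show ?thesis unfolding Let_def using fin unfolding V1_def V_def E1_def E0_def F0_def .
qed

end
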